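(* Let $(\alpha^{(j)})_{j\ge1}$ be a sequence of integer sequences, where $\alpha^{(j)}$ has length $n_j$, entries $\alpha^{(j)}_1\ge\dots\ge\alpha^{(j)}_{n_j}\ge0$, and even sum $s_j\le n_j(n_j-1)$. Suppose $n_j\to\infty$ and $s_j=o(n_j^2)$ (i.e. $s_j/n_j^2\to0$). Then $$\lim_{j\to\infty} TV\big(P(\alpha^{(j)}),\,P(\alpha^{(j)}\wedge T(n_j,s_j))\big)=0.$$
   Context: Notation: $\langle a^r\rangle$ denotes $r$ consecutive copies of $a$. For integers $n\ge1$ and even $s$ with $0\le s\le n(n-1)$, let $m=\min\{k\ge 1 : s\le k(k-1)\}$ and define the length-$n$ sequence $T(n,s)$ recursively: (i) if $s=0$, $T(n,s)=\langle 0^n\rangle$; (ii) if $s>0$ and $n>m$, $T(n,s)=\langle \gamma_1,\dots,\gamma_m,0^{n-m}\rangle$ with $\gamma=T(m,s)$; (iii) if $s>0$ and $n\le m$, $T(n,s)=\langle n-1,\gamma_1+1,\dots,\gamma_{n-1}+1\rangle$ with $\gamma=T(n-1,s-2(n-1))$. For length-$n$ sequences $\alpha,\beta$ with equal sums, the meet $\alpha\wedge\beta$ is the length-$n$ sequence with $(\alpha\wedge\beta)_k=\min\{\sum_{i=1}^k\alpha_i,\sum_{i=1}^k\beta_i\}-\min\{\sum_{i=1}^{k-1}\alpha_i,\sum_{i=1}^{k-1}\beta_i\}$ (empty sums are $0$). For a length-$n$ sequence $\alpha$ of integers in $\{0,\dots,n-1\}$, let $r_i$ be the number of entries of $\alpha$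 equal to $i$, and define $P(\alpha)=\langle r_1/n,\dots,r_{n-1}/n\rangle$, i.e. $P(\alpha)_i=r_i/n$ for $i=1,\dots,n-1$. For two such vectors $P,Q$ indexed by $\omega\in\Omega=\{1,\dots,n-1\}$, the (paper's) total variation distance is $TV(P,Q)=\sup_{\omega\in\Omega}|P_\omega-Q_\omega|$. *)

theory Defs
  imports Complex_Main
begin

(* The sequence T(n,s). Lengths n, even sums s (as nat). The guard n = 0 only
   makes the function total; it is never reached for n >= 1. *)
function Tseq :: "nat \<Rightarrow> nat \<Rightarrow> int list" where
  "Tseq n s =
     (if n = 0 then []
      else if s = 0 then replicate n 0
      else (let m = (LEAST k. 1 \<le> k \<and> s \<le> k * (k - 1)) in
            if m < n then Tseq m s @ replicate (n - m) 0
            else int (n - 1) # map (\<lambda>g. g + 1) (Tseq (n - 1) (s - 2 * (n - 1)))))"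
  by pat_completeness auto
termination
  by (relation "measure fst") (auto simp: Let_def)

definition psum :: "int list \<Rightarrow> nat \<Rightarrow> int" where
  "psum a k = sum_list (take k a)"

definition meet :: "int list \<Rightarrow> int list \<Rightarrow> int list" where
  "meet a b = map (\<lambda>k. min (psum a k) (psum b k) - min (psum a (k - 1)) (psum b (k - 1)))
                  [1..<length a + 1]"

definition Pvec :: "int list \<Rightarrow> nat \<Rightarrow> real" where
  "Pvec a i = real (card {k. k < length a \<and> a ! k = int i}) / real (length a)"

definition TV :: "nat \<Rightarrow> (nat \<Rightarrow> real) \<Rightarrow> (nat \<Rightarrow> real) \<Rightarrow> real" where
  "TV n P Q = (SUP i \<in> {1..<n}. \<bar>P i - Q i\<bar>)"

end

theory Submission imports Defs begin
declare Tseq.simps[simp del]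

lemma Tseq_len: "length (Tseq n s) = n"
proof (induction n s rule: Tseq.induct)
  case (1 n s)
  show ?case
  proof (cases "n = 0 \<or> s = 0")
    case True then show ?thesis by (subst Tseq.simps) auto
  next
    case False
    define m where "m = (LEAST k. 1 \<le> k \<and> s \<le> k * (k - 1))"
    show ?thesis
    proof (cases "m < n")
      case True
      have "Tseq n s = Tseq m s @ replicate (n - m) 0"
        using False True by (subst Tseq.simps, unfold Let_def m_def[symmetric]) simp
      then show ?thesis using 1(1)[OF _ _ m_def] False True by simp
    next
      case F2: False
      have "Tseq n s = int (n - 1) # map (\<lambda>g. g + 1) (Tseq (n - 1) (s - 2 * (n - 1)))"
        using False F2 by (subst Tseq.simps, unfold Let_def m_def[symmetric]) simp
      then show ?thesis using 1(2)[OF _ _ m_def] False F2 by simp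
    qed
  qed
qed

lemma Tseq_sum: "even s \<Longrightarrow> s \<le> n * (n - 1) \<Longrightarrow> sum_list (Tseq n s) = int s"
proof (induction n s rule: Tseq.induct)
  case (1 n s)
  show ?case
  proof (cases "n = 0 \<or> s = 0")
    case True then show ?thesis using 1(3,4) by (subst Tseq.simps) (auto simp: sum_list_replicate)
  next
    case False
    define m where "m = (LEAST k. 1 \<le> k \<and> s \<le> k * (k - 1))"
    have ex: "1 \<le> n \<and> s \<le> n * (n - 1)" using False 1(4) by auto
    have mP: "1 \<le> m \<and> s \<le> m * (m - 1)" unfolding m_def by (rule LeastI[of _ n]) (rule ex)
    show ?thesis
    proof (cases "m < n")
      case True
      have "Tseq n s = Tseq m s @ replicate (n - m) 0"
        using False True by (subst Tseq.simps, unfold Let_def m_def[symmetric]) simp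
      then show ?thesis using 1(1)[OF _ _ m_def] False True mP 1(3) by (simp add: sum_list_replicate)
    next
      case F2: False
      have T: "Tseq n s = int (n - 1) # map (\<lambda>g. g + 1) (Tseq (n - 1) (s - 2 * (n - 1)))"
        using False F2 by (subst Tseq.simps, unfold Let_def m_def[symmetric]) simp
      have "n - 1 < m" using F2 False by auto
      then have nn: "\<not> (1 \<le> n - 1 \<and> s \<le> (n - 1) * (n - 1 - 1))"
        unfolding m_def by (rule not_less_Least)
      have n2: "n \<ge> 2" using False ex by (cases "n = 1") auto
      have sgt: "s > (n - 1) * (n - 2)" using nn n2 by (simp add: not_le numeral_2_eq_2)
      have sge: "s \<ge> 2 * (n - 1)"
      proof (cases "n \<ge> 4")
        case True
        have "2 * (n - 1) \<le> (n - 2) * (n - 1)" using True by (intro mult_le_mono1) auto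
        then have "2 * (n - 1) \<le> (n - 1) * (n - 2)" by (simp only: mult.commute)
        then show ?thesis using sgt by linarith
      next
        case False
        then have "n = 2 \<or> n = 3" using n2 by auto
        then show ?thesis using sgt 1(3) by (auto elim!: evenE)
      qed
      have b: "s - 2 * (n - 1) \<le> (n - 1) * (n - 1 - 1)"
      proof -
        have "n * (n - 1) = (n - 1) * (n - 1 - 1) + 2 * (n - 1)" using n2
          by (cases n; cases "n - 1"; simp add: algebra_simps)
        then show ?thesis using 1(4) by linarith
      qed
      have e: "even (s - 2 * (n - 1))" using 1(3) sge by auto
      have IH: "sum_list (Tseq (n - 1) (s - 2 * (n - 1))) = int (s - 2 * (n - 1))"
        using 1(2)[OF _ _ m_def] False F2 e b by simp
      have sm: "sum_list (map (\<lambda>g. g + 1) xs) = sum_list xs + int (length xs)" for xs :: "int list"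
        by (induction xs) auto
      show ?thesis unfolding T using IH sm Tseq_len sge n2 by (simp add: of_nat_diff)
    qed
  qed
qed

lemma meet_len: "length (meet a b) = length a"
  by (cases "length a") (auto simp: meet_def)

lemma meet_nth: "p < length a \<Longrightarrow> meet a b ! p =
   min (psum a (p+1)) (psum b (p+1)) - min (psum a p) (psum b p)"
  by (simp add: meet_def del: upt_Suc)

lemma meet_agree:
  assumes "\<And>k. K \<le> k \<Longrightarrow> k \<le> length a \<Longrightarrow> psum a k \<le> psum b k"
    and "K \<le> p" "p < length a"
  shows "meet a b ! p = a ! p"
proof -
  have "psum a (p+1) = psum a p + a ! p"
    using assms(3) by (simp add: psum_def take_Suc_conv_app_nth)
  then show ?thesis using meet_nth[OF assms(3)] assms(1)[of p] assms(1)[of "p+1"] assms(2,3)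
    by (simp add: min_def)
qed

lemma card_diff_bound:
  assumes "finite A" "finite B" "A - {..<K} = B - {..<K}"
  shows "card A \<le> card B + K"
proof -
  have "card A \<le> card (A \<inter> {..<K}) + card (A - {..<K})"
    by (metis Int_Diff_disjoint Int_Diff_Un card_Un_le)
  also have "card (A \<inter> {..<K}) \<le> K"
    by (metis card_lessThan card_mono finite_lessThan inf_le2)
  also have "card (A - {..<K}) \<le> card B" using assms
    by (metis Diff_subset card_mono)
  finally show ?thesis by simp
qed

lemma Pvec_bound:
  assumes "length c = length a" "\<And>p. K \<le> p \<Longrightarrow> p < length a \<Longrightarrow> c ! p = a ! p"
  shows "\<bar>Pvec a i - Pvec c i\<bar> \<le> real K / real (length a)"
proof -
  let ?A = "{k. k < length a \<and> a ! k = int i}"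
  let ?C = "{k. k < length c \<and> c ! k = int i}"
  have eq: "?A - {..<K} = ?C - {..<K}" using assms by auto
  have f: "finite ?A" "finite ?C" by auto
  have 1: "card ?A \<le> card ?C + K" by (rule card_diff_bound[OF f eq])
  have 2: "card ?C \<le> card ?A + K" by (rule card_diff_bound[OF f(2,1) eq[symmetric]])
  have "\<bar>real (card ?A) - real (card ?C)\<bar> \<le> real K" using 1 2 by linarith
  then have "\<bar>real (card ?A) - real (card ?C)\<bar> / real (length a) \<le> real K / real (length a)"
    by (simp add: divide_right_mono)
  then show ?thesis unfolding Pvec_def assms(1)
    by (simp add: diff_divide_distrib[symmetric] abs_divide)
qed

lemma TV_bound:
  assumes "n \<ge> 2" "\<And>i. \<bar>P i - Q i\<bar> \<le> B"
  shows "TV n P Q \<le> B" "0 \<le> TV n P Q"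
proof -
  have ne: "{1..<n} \<noteq> {}" using assms by auto
  show "TV n P Q \<le> B" unfolding TV_def by (rule cSUP_least[OF ne]) (rule assms(2))
  have "\<bar>P 1 - Q 1\<bar> \<le> TV n P Q" unfolding TV_def
    by (rule cSUP_upper) (use assms in auto)
  then show "0 \<le> TV n P Q" by linarith
qed

lemma psum_le_sum: "(\<And>x. x \<in> set a \<Longrightarrow> 0 \<le> x) \<Longrightarrow> psum a k \<le> sum_list a"
proof -
  assume h: "\<And>x. x \<in> set a \<Longrightarrow> 0 \<le> x"
  have "sum_list a = sum_list (take k a) + sum_list (drop k a)"
    by (metis append_take_drop_id sum_list_append)
  moreover have "0 \<le> sum_list (drop k a)"
    by (rule sum_list_nonneg) (meson h in_set_dropD)
  ultimately show ?thesis by (simp add: psum_def)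
qed

definition mT :: "nat \<Rightarrow> nat" where "mT s = (LEAST k. 1 \<le> k \<and> s \<le> k * (k - 1))"

lemma mT_bound: "real (mT s) \<le> sqrt (real s) + 2"
proof (cases "mT s \<le> 2")
  case True
  then have "real (mT s) \<le> 2" by simp
  moreover have "0 \<le> sqrt (real s)" by simp
  ultimately show ?thesis by linarith
next
  case False
  have "mT s - 1 < mT s" using False by auto
  then have nn: "\<not> (1 \<le> mT s - 1 \<and> s \<le> (mT s - 1) * (mT s - 1 - 1))"
    unfolding mT_def by (rule not_less_Least)
  then have "s > (mT s - 1) * (mT s - 2)" using False by (simp add: not_le numeral_2_eq_2)
  moreover have "(mT s - 2) * (mT s - 2) \<le> (mT s - 1) * (mT s - 2)" by (intro mult_right_mono) auto
  ultimately have "real ((mT s - 2) * (mT s - 2)) < real s" by linarith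
  then have "real (mT s - 2) ^ 2 < real s" by (simp add: power2_eq_square)
  then have "real (mT s - 2) < sqrt (real s)" using real_less_rsqrt by blast
  then show ?thesis using False by (simp add: of_nat_diff)
qed

lemma single_bound:
  fixes a :: "int list"
  assumes nonneg: "\<And>x. x \<in> set a \<Longrightarrow> 0 \<le> x"
    and ev: "even (sum_list a)"
    and sb: "sum_list a \<le> int (length a) * (int (length a) - 1)"
    and n2: "length a \<ge> 2"
  shows "TV (length a) (Pvec a) (Pvec (meet a (Tseq (length a) (nat (sum_list a)))))
          \<le> (sqrt (real (nat (sum_list a))) + 2) / real (length a)"
    "0 \<le> TV (length a) (Pvec a) (Pvec (meet a (Tseq (length a) (nat (sum_list a)))))"
proof -
  define n where "n = length a"
  define s where "s = nat (sum_list a)"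
  define c where "c = meet a (Tseq n s)"
  have s0: "sum_list a \<ge> 0" by (rule sum_list_nonneg) (use nonneg in auto)
  have si: "int s = sum_list a" using s0 s_def by simp
  have se: "even s" using ev si by (metis even_of_nat)
  have sb': "s \<le> n * (n - 1)"
  proof -
    have "int s \<le> int (n * (n - 1))" using sb si n2 unfolding n_def by (simp add: of_nat_diff)
    then show ?thesis by linarith
  qed
  have psa: "\<And>k. psum a k \<le> sum_list a" by (rule psum_le_sum) (rule nonneg)
  have clen: "length c = length a" by (simp add: c_def meet_len)
  obtain K where K: "K \<le> mT s" "\<And>p. K \<le> p \<Longrightarrow> p < length a \<Longrightarrow> c ! p = a ! p"
  proof (cases "s = 0")
    case True
    have "Tseq n s = replicate n 0" using True n2 n_def by (subst Tseq.simps) auto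
    then have h: "\<And>k. 0 \<le> k \<Longrightarrow> k \<le> length a \<Longrightarrow> psum a k \<le> psum (Tseq n s) k"
      using psa True si by (simp add: psum_def sum_list_replicate)
    show ?thesis by (rule that[of 0]) (auto simp: c_def intro: meet_agree[OF h])
  next
    case sn0: False
    show ?thesis
    proof (cases "mT s < n")
      case True
      have T: "Tseq n s = Tseq (mT s) s @ replicate (n - mT s) 0"
        using sn0 True n2 n_def by (subst Tseq.simps, unfold Let_def mT_def[symmetric]) auto
      have ex: "1 \<le> n \<and> s \<le> n * (n - 1)" using sb' n2 n_def by auto
      have mP: "1 \<le> mT s \<and> s \<le> mT s * (mT s - 1)" unfolding mT_def by (rule LeastI[of _ n]) (rule ex)
      have sumT: "sum_list (Tseq (mT s) s) = int s" using Tseq_sum se mP by blast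
      have h: "\<And>k. mT s \<le> k \<Longrightarrow> k \<le> length a \<Longrightarrow> psum a k \<le> psum (Tseq n s) k"
      proof -
        fix k assume k: "mT s \<le> k" "k \<le> length a"
        have "psum (Tseq n s) k = int s"
          unfolding psum_def T using k Tseq_len[of "mT s" s]
          by (simp add: sumT sum_list_replicate)
        then show "psum a k \<le> psum (Tseq n s) k" using psa si by simp
      qed
      show ?thesis by (rule that[of "mT s"]) (auto simp: c_def intro: meet_agree[OF h])
    next
      case False
      then show ?thesis using that[of n] n_def by auto
    qed
  qed
  have "\<And>i. \<bar>Pvec a i - Pvec c i\<bar> \<le> real K / real n"
    using Pvec_bound[OF clen K(2)] n_def by simp
  moreover have "real K / real n \<le> (sqrt (real s) + 2) / real n"
    using K(1) mT_bound[of s] by (intro divide_right_mono) auto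
  ultimately have "\<And>i. \<bar>Pvec a i - Pvec c i\<bar> \<le> (sqrt (real s) + 2) / real n" by (meson order_trans)
  from TV_bound[OF _ this] n2 show "TV (length a) (Pvec a) (Pvec (meet a (Tseq (length a) (nat (sum_list a)))))
          \<le> (sqrt (real (nat (sum_list a))) + 2) / real (length a)"
    "0 \<le> TV (length a) (Pvec a) (Pvec (meet a (Tseq (length a) (nat (sum_list a)))))"
    unfolding c_def n_def s_def by auto
qed

theorem theorem5:
  fixes \<alpha> :: "nat \<Rightarrow> int list"
  assumes noninc: "\<And>j. sorted_wrt (\<ge>) (\<alpha> j)"
    and nonneg: "\<And>j x. x \<in> set (\<alpha> j) \<Longrightarrow> 0 \<le> x"
    and even_sum: "\<And>j. even (sum_list (\<alpha> j))"
    and sum_bound: "\<And>j. sum_list (\<alpha> j) \<le> int (length (\<alpha> j)) * (int (length (\<alpha> j)) - 1)"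
    and len_inf: "filterlim (\<lambda>j. length (\<alpha> j)) at_top sequentially"
    and sum_small: "(\<lambda>j. real_of_int (sum_list (\<alpha> j)) / (real (length (\<alpha> j)))\<^sup>2) \<longlonglongrightarrow> 0"
  shows "(\<lambda>j. TV (length (\<alpha> j)) (Pvec (\<alpha> j))
              (Pvec (meet (\<alpha> j) (Tseq (length (\<alpha> j)) (nat (sum_list (\<alpha> j))))))) \<longlonglongrightarrow> 0"
proof -
  have ev: "eventually (\<lambda>j. 2 \<le> length (\<alpha> j)) sequentially"
    using len_inf by (simp add: filterlim_at_top)
  have lim1: "(\<lambda>j. sqrt (real_of_int (sum_list (\<alpha> j)) / (real (length (\<alpha> j)))\<^sup>2)) \<longlonglongrightarrow> 0"
    using tendsto_real_sqrt[OF sum_small] by simp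
  have inf: "filterlim (\<lambda>j. real (length (\<alpha> j))) at_infinity sequentially"
    by (rule filterlim_at_top_imp_at_infinity)
       (rule filterlim_compose[OF filterlim_real_sequentially len_inf])
  have lim2: "(\<lambda>j. 2 / real (length (\<alpha> j))) \<longlonglongrightarrow> 0"
    by (rule tendsto_divide_0[OF tendsto_const inf])
  have lim: "(\<lambda>j. sqrt (real_of_int (sum_list (\<alpha> j)) / (real (length (\<alpha> j)))\<^sup>2)
       + 2 / real (length (\<alpha> j))) \<longlonglongrightarrow> 0"
    using tendsto_add[OF lim1 lim2] by simp
  have eq: "eventually (\<lambda>j. (sqrt (real (nat (sum_list (\<alpha> j)))) + 2) / real (length (\<alpha> j)) =
      sqrt (real_of_int (sum_list (\<alpha> j)) / (real (length (\<alpha> j)))\<^sup>2)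
       + 2 / real (length (\<alpha> j))) sequentially"
    using ev
  proof eventually_elim
    case (elim j)
    have s0: "sum_list (\<alpha> j) \<ge> 0" by (rule sum_list_nonneg) (use nonneg in auto)
    show ?case using elim s0 by (simp add: real_sqrt_divide add_divide_distrib)
  qed
  have lim': "(\<lambda>j. (sqrt (real (nat (sum_list (\<alpha> j)))) + 2) / real (length (\<alpha> j))) \<longlonglongrightarrow> 0"
    by (rule Lim_transform_eventually[OF lim]) (use eq in \<open>simp add: eq_commute\<close>)
  show ?thesis
  proof (rule tendsto_sandwich[OF _ _ tendsto_const lim'])
    show "eventually (\<lambda>j. 0 \<le> TV (length (\<alpha> j)) (Pvec (\<alpha> j))
              (Pvec (meet (\<alpha> j) (Tseq (length (\<alpha> j)) (nat (sum_list (\<alpha> j))))))) sequentially"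
      using ev by eventually_elim (rule single_bound(2), use nonneg even_sum sum_bound in auto)
    show "eventually (\<lambda>j. TV (length (\<alpha> j)) (Pvec (\<alpha> j))
              (Pvec (meet (\<alpha> j) (Tseq (length (\<alpha> j)) (nat (sum_list (\<alpha> j)))))) \<le>
          (sqrt (real (nat (sum_list (\<alpha> j)))) + 2) / real (length (\<alpha> j))) sequentially"
      using ev by eventually_elim (rule single_bound(1), use nonneg even_sum sum_bound in auto)
  qed
qed

end
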